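(* Let $P$ denote the set of prime numbers, and let $Q \subseteq P$ be a random subset in which each prime $p$ is included independently with probability $\Pr(p \in Q) = 1/2$. Define the completely multiplicative function $\lambda_Q : \mathbb{N} \to \{-1,1\}$ by $\lambda_Q(p) = -1$ if $p \in Q$, $\lambda_Q(p) = 1$ if $p \in P \setminus Q$, and $\lambda_Q(p_1^{e_1}\cdots p_k^{e_k}) = \lambda_Q(p_1)^{e_1}\cdots\lambda_Q(p_k)^{e_k}$ (with $\lambda_Q(1)=1$). Let $A_Q = \{ n \in \mathbb{N} : \lambda_Q(n) = -1\}$. Then, with probability $1$ (i.e. for almost every $Q$), the set $A_Q$ is normal.
   Context: $\mathbb{N} = \{1,2,3,\dots\}$. An infinite binary sequence $(\lambda_i)_{i \ge 1}$ is called normal if every finite binary word $\omega$ of length $|\omega|$ occurs in the sequence with asymptotic frequency $2^{-|\omega|}$, i.e. the number of $i \le N$ with $(\lambda_i,\dots,\lambda_{i+|\omega|-1}) = \omega$, divided by $N$, tends to $2^{-|\omega|}$ as $N \to \infty$. A set $B \subseteq \mathbb{N}$ is called normal if its indicator sequence ($\lambda_i = 1$ iff $i \in B$) is normal. *)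

theory Defs
  imports "HOL-Probability.Probability" "HOL-Computational_Algebra.Primes"
begin

definition lambdaQ :: "nat set \<Rightarrow> nat \<Rightarrow> int" where
  "lambdaQ Q n = (\<Prod>p\<in>prime_factors n. (if p \<in> Q then -1 else 1) ^ multiplicity p n)"

definition AQ :: "nat set \<Rightarrow> nat set" where
  "AQ Q = {n. n \<ge> 1 \<and> lambdaQ Q n = -1}"

definition normal_seq :: "(nat \<Rightarrow> bool) \<Rightarrow> bool" where
  "normal_seq x \<longleftrightarrow> (\<forall>w :: bool list.
     (\<lambda>N. real (card {i \<in> {1..N}. \<forall>j < length w. x (i + j) = w ! j}) / real N)
       \<longlonglongrightarrow> (1/2) ^ length w)"

definition normal_set :: "nat set \<Rightarrow> bool" where
  "normal_set B \<longleftrightarrow> normal_seq (\<lambda>i. i \<in> B)"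

definition coin_space :: "(nat \<Rightarrow> bool) measure" where
  "coin_space = PiM UNIV (\<lambda>_::nat. measure_pmf (bernoulli_pmf (1/2)))"

definition randQ :: "(nat \<Rightarrow> bool) \<Rightarrow> nat set" where
  "randQ \<omega> = {p. prime p \<and> \<omega> p}"

end

theory Submission
  imports Defs "HOL-Real_Asymp.Real_Asymp"
begin


definition evm :: "nat \<Rightarrow> bool" where
  "evm n \<longleftrightarrow> (\<forall>p. prime p \<longrightarrow> even (multiplicity p n))"

definition oddset :: "nat \<Rightarrow> nat set" where
  "oddset n = {p. prime p \<and> odd (multiplicity p n)}"

definition sqp :: "nat \<Rightarrow> nat" where
  "sqp n = (\<Prod>p\<in>prime_factors n. p ^ (multiplicity p n div 2))"

lemma oddset_sub: "oddset n \<subseteq> prime_factors n"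
proof
  fix p assume "p \<in> oddset n"
  then have "prime p" "odd (multiplicity p n)" by (auto simp: oddset_def)
  then have "multiplicity p n > 0" by (cases "multiplicity p n") auto
  with \<open>prime p\<close> show "p \<in> prime_factors n" by (simp add: prime_factors_multiplicity)
qed

lemma finite_oddset: "finite (oddset n)"
  using oddset_sub by (rule finite_subset) simp

lemma mult_prod_primes:
  assumes "finite G" "\<And>p. p \<in> G \<Longrightarrow> prime p" "prime q"
  shows "multiplicity q (\<Prod>p\<in>G. p) = (if q \<in> G then 1 else 0)"
proof -
  have "multiplicity q (\<Prod>p\<in>G. p) = (\<Sum>p\<in>G. multiplicity q p)"
    using assms by (intro prime_elem_multiplicity_prod_distrib) (auto dest: assms(2))
  also have "\<dots> = (\<Sum>p\<in>G. if p = q then 1 else 0)"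
    using assms by (intro sum.cong refl) (auto simp: prime_multiplicity_other)
  also have "\<dots> = (if q \<in> G then 1 else 0)"
    using assms(1) by (simp add: sum.delta')
  finally show ?thesis .
qed

lemma mult_sqp:
  assumes "n > 0" "prime q"
  shows "multiplicity q (sqp n) = multiplicity q n div 2"
proof -
  have "multiplicity q (sqp n) = (\<Sum>p\<in>prime_factors n. multiplicity q (p ^ (multiplicity p n div 2)))"
    unfolding sqp_def using assms
    by (intro prime_elem_multiplicity_prod_distrib) (auto simp: in_prime_factors_iff)
  also have "\<dots> = (\<Sum>p\<in>prime_factors n. if p = q then multiplicity p n div 2 else 0)"
    using assms by (intro sum.cong refl) (auto simp: in_prime_factors_iff multiplicity_distinct_prime_power)
  also have "\<dots> = (if q \<in> prime_factors n then multiplicity q n div 2 else 0)"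
    by (simp add: sum.delta')
  also have "\<dots> = multiplicity q n div 2"
    using assms prime_factors_multiplicity[of n] by auto
  finally show ?thesis .
qed

lemma sqp_pos: "n > 0 \<Longrightarrow> sqp n > 0"
  unfolding sqp_def by (intro prod_pos) (auto simp: in_prime_factors_iff prime_gt_0_nat)

lemma prod_primes_pos: "(\<And>p. p \<in> G \<Longrightarrow> prime p) \<Longrightarrow> (\<Prod>p\<in>G. p) > (0::nat)"
  by (cases "finite G") (auto intro!: prod_pos simp: prime_gt_0_nat)

lemma decomp:
  assumes "n > 0"
  shows "n = (\<Prod>p\<in>oddset n. p) * sqp n ^ 2"
proof (rule multiplicity_eq_nat)
  have pg: "(\<Prod>p\<in>oddset n. p) > 0" by (rule prod_primes_pos) (auto simp: oddset_def)
  show "0 < (\<Prod>p\<in>oddset n. p) * sqp n ^ 2" using pg sqp_pos[OF assms] by simp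
  show "n > 0" by fact
  fix q :: nat assume q: "prime q"
  have "multiplicity q ((\<Prod>p\<in>oddset n. p) * sqp n ^ 2)
        = multiplicity q (\<Prod>p\<in>oddset n. p) + multiplicity q (sqp n ^ 2)"
    using pg sqp_pos[OF assms] q by (intro prime_elem_multiplicity_mult_distrib) auto
  also have "multiplicity q (sqp n ^ 2) = 2 * (multiplicity q n div 2)"
    using q sqp_pos[OF assms] by (simp add: prime_elem_multiplicity_power_distrib mult_sqp[OF assms q])
  also have "multiplicity q (\<Prod>p\<in>oddset n. p) = (if odd (multiplicity q n) then 1 else 0)"
    using q finite_oddset[of n, unfolded oddset_def] by (subst mult_prod_primes) (auto simp: oddset_def)
  finally show "multiplicity q n = multiplicity q ((\<Prod>p\<in>oddset n. p) * sqp n ^ 2)"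
    by presburger
qed

lemma fiber_card:
  "real (card {i \<in> {1..N}. oddset (i + j0) = G}) \<le> sqrt (real (N + j0)) + 1"
proof -
  let ?A = "{i \<in> {1..N}. oddset (i + j0) = G}"
  let ?M = "nat \<lfloor>sqrt (real (N + j0))\<rfloor>"
  have inj: "inj_on (\<lambda>i. sqp (i + j0)) ?A"
  proof (rule inj_onI)
    fix x y assume x: "x \<in> ?A" and y: "y \<in> ?A" and e: "sqp (x + j0) = sqp (y + j0)"
    have "x + j0 = (\<Prod>p\<in>G. p) * sqp (x + j0) ^ 2" using x decomp[of "x + j0"] by auto
    also have "\<dots> = (\<Prod>p\<in>G. p) * sqp (y + j0) ^ 2" using e by simp
    also have "\<dots> = y + j0" using y decomp[of "y + j0"] by auto
    finally show "x = y" by simp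
  qed
  have img: "(\<lambda>i. sqp (i + j0)) ` ?A \<subseteq> {..?M}"
  proof (rule image_subsetI)
    fix i assume "i \<in> ?A"
    then have i: "1 \<le> i" "i \<le> N" by auto
    have pg: "(\<Prod>p\<in>oddset (i+j0). p) > 0" by (rule prod_primes_pos) (auto simp: oddset_def)
    have "sqp (i + j0) ^ 2 \<le> (\<Prod>p\<in>oddset (i+j0). p) * sqp (i + j0) ^ 2" using pg by simp
    also have "\<dots> = i + j0" using decomp[of "i + j0"] i by simp
    also have "\<dots> \<le> N + j0" using i by simp
    finally have "real (sqp (i + j0)) ^ 2 \<le> real (N + j0)" by (simp flip: of_nat_power)
    then have "real (sqp (i + j0)) \<le> sqrt (real (N + j0))" by (rule real_le_rsqrt)
    then show "sqp (i + j0) \<in> {..?M}" by (simp add: le_nat_floor)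
  qed
  have "card ?A \<le> card {..?M}"
    using card_inj_on_le[OF inj img] by simp
  then have "card ?A \<le> Suc ?M" by simp
  then have "real (card ?A) \<le> real (Suc ?M)" by (rule of_nat_mono)
  also have "real (Suc ?M) \<le> sqrt (real (N + j0)) + 1"
    using of_int_floor_le[of "sqrt (real (N + j0))"] by simp
  finally show ?thesis .
qed

definition PT :: "nat set \<Rightarrow> nat \<Rightarrow> nat" where
  "PT T i = (\<Prod>j\<in>T. i + j)"

lemma PT_pos: "i \<ge> 1 \<Longrightarrow> PT T i > 0"
  by (cases "finite T") (auto simp: PT_def intro!: prod_pos)

lemma mult_pos_dvd: "multiplicity p (x::nat) > 0 \<Longrightarrow> p dvd x"
  using not_dvd_imp_multiplicity_0 by fastforce

lemma oddset_in_F: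
  assumes c: "c > 0" and i: "i \<ge> 1" and T: "finite T" "j0 \<in> T" "T \<subseteq> {..<k}"
    and ev: "evm (c * PT T i)"
  shows "oddset (i + j0) \<subseteq> prime_factors c \<union> {p. prime p \<and> p < k}"
proof
  fix p assume "p \<in> oddset (i + j0)"
  then have p: "prime p" "odd (multiplicity p (i + j0))" by (auto simp: oddset_def)
  show "p \<in> prime_factors c \<union> {p. prime p \<and> p < k}"
  proof (cases "p < k")
    case True then show ?thesis using p by auto
  next
    case False
    have pd0: "p dvd (i + j0)" using p(2) by (intro mult_pos_dvd) (cases "multiplicity p (i + j0)", auto)
    have other: "multiplicity p (i + j) = 0" if j: "j \<in> T" "j \<noteq> j0" for j
    proof (rule not_dvd_imp_multiplicity_0, rule notI)
      assume pd: "p dvd (i + j)"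
      have "j < k" "j0 < k" using T j by auto
      show False
      proof (cases "j < j0")
        case True
        then have "p dvd (i + j0) - (i + j)" using pd pd0 by (intro dvd_diff_nat)
        then have "p dvd (j0 - j)" by simp
        then have "p \<le> j0 - j" using True by (intro dvd_imp_le) auto
        then show False using False \<open>j0 < k\<close> by linarith
      next
        case False2: False
        then have lt: "j0 < j" using j by auto
        then have "p dvd (i + j) - (i + j0)" using pd pd0 by (intro dvd_diff_nat)
        then have "p dvd (j - j0)" by simp
        then have "p \<le> j - j0" using lt by (intro dvd_imp_le) auto
        then show False using False \<open>j < k\<close> by linarith
      qed
    qed
    have "multiplicity p (PT T i) = (\<Sum>j\<in>T. multiplicity p (i + j))"
      unfolding PT_def using p T i by (intro prime_elem_multiplicity_prod_distrib) auto
    also have "\<dots> = multiplicity p (i + j0) + (\<Sum>j\<in>T - {j0}. multiplicity p (i + j))"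
      using T by (simp add: sum.remove)
    also have "(\<Sum>j\<in>T - {j0}. multiplicity p (i + j)) = 0"
      using other by (intro sum.neutral) auto
    finally have mP: "multiplicity p (PT T i) = multiplicity p (i + j0)" by simp
    have "multiplicity p (c * PT T i) = multiplicity p c + multiplicity p (PT T i)"
      using p c PT_pos[OF i, of T] by (intro prime_elem_multiplicity_mult_distrib) auto
    moreover have "even (multiplicity p (c * PT T i))" using ev p by (auto simp: evm_def)
    ultimately have "odd (multiplicity p c)" using mP p(2) by auto
    then have "multiplicity p c > 0" by (cases "multiplicity p c") auto
    then show ?thesis using p by (simp add: prime_factors_multiplicity)
  qed
qed

lemma count_bound:
  assumes c: "c > 0" and T: "finite T" "j0 \<in> T" "T \<subseteq> {..<k}"
  shows "real (card {i\<in>{1..N}. evm (c * PT T i)})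
           \<le> 2 ^ (card (prime_factors c) + k) * (sqrt (real (N + k)) + 1)"
proof -
  define F where "F = prime_factors c \<union> {p. prime p \<and> p < k}"
  have finF: "finite F" unfolding F_def by auto
  have "card {p. prime p \<and> p < k} \<le> card {..<k}" by (intro card_mono) auto
  then have cF: "card F \<le> card (prime_factors c) + k"
    unfolding F_def using card_Un_le[of "prime_factors c" "{p. prime p \<and> p < k}"] by simp
  have sub: "{i\<in>{1..N}. evm (c * PT T i)} \<subseteq> (\<Union>G\<in>Pow F. {i\<in>{1..N}. oddset (i + j0) = G})"
    using oddset_in_F[OF c _ T] unfolding F_def by auto
  have "card {i\<in>{1..N}. evm (c * PT T i)} \<le> card (\<Union>G\<in>Pow F. {i\<in>{1..N}. oddset (i + j0) = G})"
    by (intro card_mono sub, rule finite_subset[of _ "{1..N}"]) auto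
  also have "\<dots> \<le> (\<Sum>G\<in>Pow F. card {i\<in>{1..N}. oddset (i + j0) = G})"
    using finF by (intro card_UN_le) auto
  finally have "real (card {i\<in>{1..N}. evm (c * PT T i)}) \<le> (\<Sum>G\<in>Pow F. real (card {i\<in>{1..N}. oddset (i + j0) = G}))"
    by (simp flip: of_nat_sum)
  also have "\<dots> \<le> (\<Sum>G\<in>Pow F. sqrt (real (N + j0)) + 1)"
    by (intro sum_mono fiber_card)
  also have "\<dots> = 2 ^ card F * (sqrt (real (N + j0)) + 1)"
    using finF by (simp add: card_Pow)
  also have "\<dots> \<le> 2 ^ (card (prime_factors c) + k) * (sqrt (real (N + k)) + 1)"
  proof (intro mult_mono)
    show "(2::real) ^ card F \<le> 2 ^ (card (prime_factors c) + k)" using cF by (intro power_increasing) auto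
    have "j0 < k" using T by auto
    then show "sqrt (real (N + j0)) + 1 \<le> sqrt (real (N + k)) + 1" by simp
  qed auto
  finally show ?thesis .
qed

lemma omega_bound:
  assumes c: "(c::nat) > 0"
  shows "(2 ^ r :: nat) ^ card (prime_factors c) \<le> (2 ^ r) ^ (2 ^ r) * c"
proof -
  define S where "S = {p\<in>prime_factors c. p < 2 ^ r}"
  define L where "L = {p\<in>prime_factors c. \<not> p < 2 ^ r}"
  have fin: "finite S" "finite L" unfolding S_def L_def by auto
  have disj: "prime_factors c = S \<union> L" "S \<inter> L = {}" unfolding S_def L_def by auto
  have cardc: "card (prime_factors c) = card S + card L"
    using disj fin by (simp add: card_Un_disjoint)
  have "card S \<le> card {..<(2::nat)^r}" unfolding S_def by (intro card_mono) auto
  then have cS: "card S \<le> 2 ^ r" by simp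
  have "(2 ^ r :: nat) ^ card L = (\<Prod>p\<in>L. 2 ^ r)" by simp
  also have "\<dots> \<le> (\<Prod>p\<in>L. p)" by (intro prod_mono) (auto simp: L_def)
  also have "\<dots> \<le> (\<Prod>p\<in>prime_factors c. p)"
  proof -
    have "(\<Prod>p\<in>prime_factors c. p) = (\<Prod>p\<in>S. p) * (\<Prod>p\<in>L. p)"
      using disj fin by (simp add: prod.union_disjoint)
    moreover have "(\<Prod>p\<in>S. p) > 0" by (rule prod_primes_pos) (auto simp: S_def in_prime_factors_iff)
    ultimately show ?thesis by simp
  qed
  also have "\<dots> \<le> (\<Prod>p\<in>prime_factors c. p ^ multiplicity p c)"
  proof (intro prod_mono conjI)
    fix p assume "p \<in> prime_factors c"
    then have "multiplicity p c > 0" "prime p" by (auto simp: prime_factors_multiplicity)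
    then show "p \<le> p ^ multiplicity p c"
      by (metis One_nat_def le_refl nat_less_le power_increasing power_one_right prime_gt_0_nat Suc_leI)
  qed auto
  also have "\<dots> = c" using prime_factorization_nat[OF c] by simp
  finally have cL: "(2 ^ r :: nat) ^ card L \<le> c" .
  have "(2 ^ r :: nat) ^ card (prime_factors c) = (2 ^ r) ^ card S * (2 ^ r) ^ card L"
    by (simp add: cardc power_add)
  also have "\<dots> \<le> (2 ^ r) ^ (2 ^ r) * c"
    by (intro mult_mono power_increasing cS cL) auto
  finally show ?thesis .
qed

lemma le_powr_inv:
  assumes "x \<ge> 0" "x ^ m \<le> y" "m > 0"
  shows "x \<le> y powr (1 / real m)"
proof (cases "x = 0")
  case True
  have "y \<ge> 0" using assms by (metis order_trans zero_le_power)
  then show ?thesis using True by simp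
next
  case False
  then have xp: "x > 0" using assms by simp
  have "x ^ m = x powr (real m)" using xp by (rule powr_realpow[symmetric])
  then have "(x ^ m) powr (1 / real m) = x powr (real m * (1 / real m))" by (simp add: powr_powr)
  also have "real m * (1 / real m) = 1" using assms(3) by simp
  finally have "x = (x ^ m) powr (1 / real m)" using xp by simp
  also have "\<dots> \<le> y powr (1 / real m)"
    using xp assms by (intro powr_mono2) auto
  finally show ?thesis .
qed

lemma PT_le:
  assumes T: "T \<subseteq> {..<k}" and i: "i \<le> N"
  shows "PT T i \<le> (N + k) ^ k"
proof -
  have fin: "finite T" using T finite_subset by blast
  have "PT T i \<le> (\<Prod>j\<in>T. N + k)" unfolding PT_def
    using T i by (intro prod_mono) auto
  also have "\<dots> = (N + k) ^ card T" by simp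
  also have "\<dots> \<le> (N + k) ^ k"
  proof (cases "N + k = 0")
    case True
    then have "T = {}" "k = 0" using T by auto
    then show ?thesis by simp
  next
    case False
    have "card T \<le> card {..<k}" using T by (intro card_mono) auto
    then show ?thesis using False by (intro power_increasing) auto
  qed
  finally show ?thesis .
qed

lemma D_bound:
  assumes T: "T \<noteq> {}" "T \<subseteq> {..<k}"
  shows "\<exists>C. \<forall>N\<ge>1. real (\<Sum>i'\<in>{1..N}. card {i\<in>{1..N}. evm (PT T i' * PT T i)})
                \<le> C * real N * real N powr (3/4)"
proof -
  have finT: "finite T" using T finite_subset by blast
  obtain j0 where j0: "j0 \<in> T" using T by auto
  have k1: "k \<ge> 1" using j0 T by (cases k) auto
  define r where "r = 4 * k"
  have r0: "r > 0" using k1 by (simp add: r_def)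
  define K :: real where "K = real ((2 ^ r) ^ (2 ^ r))"
  have K0: "K \<ge> 0" by (simp add: K_def)
  define C where "C = 2 ^ (k + 1) * K powr (1 / real r) * real (k + 1) powr (3/4)"
  have cnt: "real (card {i\<in>{1..N}. evm (PT T i' * PT T i)}) \<le> C * real N powr (3/4)"
    if N: "N \<ge> 1" and i': "i' \<in> {1..N}" for N i'
  proof -
    define c where "c = PT T i'"
    have c0: "c > 0" unfolding c_def using i' by (intro PT_pos) auto
    have cle: "c \<le> (N + k) ^ k" unfolding c_def using i' T by (intro PT_le) auto
    define w where "w = card (prime_factors c)"
    have "((2::real) ^ w) ^ r = real ((2 ^ r) ^ w)" by (simp add: power_mult[symmetric] mult.commute)
    also have "\<dots> \<le> real ((2 ^ r) ^ (2 ^ r) * c)" unfolding w_def using omega_bound[OF c0] by (simp only: of_nat_le_iff)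
    also have "\<dots> = K * real c" by (simp add: K_def)
    also have "\<dots> \<le> K * real (N + k) ^ k"
    proof (rule mult_left_mono[OF _ K0])
      have "real c \<le> real ((N + k) ^ k)" using cle by (simp only: of_nat_le_iff)
      then show "real c \<le> real (N + k) ^ k" by (simp only: of_nat_power)
    qed
    finally have "(2::real) ^ w \<le> (K * real (N + k) ^ k) powr (1 / real r)"
      using r0 by (intro le_powr_inv) auto
    also have "\<dots> = K powr (1 / real r) * real (N + k) powr (1/4)"
    proof -
      have xp: "real (N + k) > 0" using k1 by simp
      have e1: "real (N + k) ^ k = real (N + k) powr (real k)" using xp by (rule powr_realpow[symmetric])
      have "(K * real (N + k) ^ k) powr (1 / real r) = K powr (1 / real r) * (real (N + k) ^ k) powr (1 / real r)"
        by (rule powr_mult)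
      also have "(real (N + k) ^ k) powr (1 / real r) = real (N + k) powr (real k * (1 / real r))"
        unfolding e1 by (simp only: powr_powr)
      also have "real k * (1 / real r) = 1/4" using k1 by (simp add: r_def)
      finally show ?thesis .
    qed
    finally have w_le: "(2::real) ^ w \<le> K powr (1 / real r) * real (N + k) powr (1/4)" .
    have Nk1: "real (N + k) \<ge> 1" using N by simp
    have sq: "sqrt (real (N + k)) + 1 \<le> 2 * real (N + k) powr (1/2)"
      using Nk1 by (simp add: powr_half_sqrt)
    have "real (card {i\<in>{1..N}. evm (c * PT T i)}) \<le> 2 ^ (w + k) * (sqrt (real (N + k)) + 1)"
      unfolding w_def by (rule count_bound[OF c0 finT j0 T(2)])
    also have "\<dots> \<le> 2 ^ k * (K powr (1 / real r) * real (N + k) powr (1/4)) * (2 * real (N + k) powr (1/2))"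
    proof -
      have "(2::real) ^ (w + k) = 2 ^ k * 2 ^ w" by (simp add: power_add)
      moreover have "(2::real) ^ w * (sqrt (real (N + k)) + 1) \<le> (K powr (1 / real r) * real (N + k) powr (1/4)) * (2 * real (N + k) powr (1/2))"
        by (intro mult_mono w_le sq) auto
      ultimately show ?thesis by (simp add: mult.assoc)
    qed
    also have "\<dots> = 2 ^ (k+1) * K powr (1 / real r) * (real (N + k) powr (1/4) * real (N + k) powr (1/2))"
      by simp
    also have "\<dots> = 2 ^ (k+1) * K powr (1 / real r) * real (N + k) powr (3/4)"
    proof -
      have "real (N + k) powr (1/4) * real (N + k) powr (1/2) = real (N + k) powr (3/4)"
        using Nk1 by (simp add: powr_add[symmetric])
      then show ?thesis by simp
    qed
    also have "\<dots> \<le> 2 ^ (k+1) * K powr (1 / real r) * (real (k + 1) powr (3/4) * real N powr (3/4))"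
    proof (intro mult_left_mono)
      have "real (N + k) powr (3/4) \<le> (real (k + 1) * real N) powr (3/4)"
      proof (intro powr_mono2)
        have "real k * 1 \<le> real k * real N" using N by (intro mult_left_mono) auto
        then show "real (N + k) \<le> real (k + 1) * real N" by (simp add: algebra_simps)
      qed auto
      then show "real (N + k) powr (3/4) \<le> real (k + 1) powr (3/4) * real N powr (3/4)"
        by (simp add: powr_mult)
    qed auto
    finally show ?thesis unfolding c_def C_def by (simp add: mult_ac)
  qed
  show ?thesis
  proof (intro exI allI impI)
    fix N :: nat assume N: "N \<ge> 1"
    have "real (\<Sum>i'\<in>{1..N}. card {i\<in>{1..N}. evm (PT T i' * PT T i)})
          = (\<Sum>i'\<in>{1..N}. real (card {i\<in>{1..N}. evm (PT T i' * PT T i)}))" by simp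
    also have "\<dots> \<le> (\<Sum>i'\<in>{1..N}. C * real N powr (3/4))"
      by (intro sum_mono cnt N)
    also have "\<dots> = C * real N * real N powr (3/4)" by simp
    finally show "real (\<Sum>i'\<in>{1..N}. card {i\<in>{1..N}. evm (PT T i' * PT T i)}) \<le> C * real N * real N powr (3/4)" .
  qed
qed


definition flipc :: "nat \<Rightarrow> (nat \<Rightarrow> bool) \<Rightarrow> (nat \<Rightarrow> bool)" where
  "flipc p w = fun_upd w p (\<not> w p)"

lemma bern_flip: "emeasure (measure_pmf (bernoulli_pmf (1/2))) (Not -` A) = emeasure (measure_pmf (bernoulli_pmf (1/2))) A"
proof -
  have "map_pmf Not (bernoulli_pmf (1/2)) = bernoulli_pmf (1/2)"
  proof (rule pmf_eqI)
    fix i :: bool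
    have *: "Not -` {b} = {\<not> b}" for b by auto
    show "pmf (map_pmf Not (bernoulli_pmf (1/2))) i = pmf (bernoulli_pmf (1/2)) i"
      by (cases i) (simp_all add: pmf_map * measure_pmf_single)
  qed
  then show ?thesis by (metis emeasure_map_pmf)
qed

lemma flip_meas: "flipc p \<in> measurable coin_space coin_space"
  unfolding coin_space_def flipc_def
  by (rule measurable_PiM_single') (auto simp: space_PiM)

lemma flip_distr: "distr coin_space coin_space (flipc p) = coin_space"
proof -
  interpret P: product_prob_space "\<lambda>_::nat. measure_pmf (bernoulli_pmf (1/2))" UNIV
    by unfold_locales
  show ?thesis
  unfolding coin_space_def
  proof (rule P.PiM_eq)
    fix J :: "nat set" and F assume J: "finite J" "J \<subseteq> UNIV"
    define F' where "F' j = (if j = p then Not -` F j else F j)" for j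
    have pw: "\<And>x i. (flipc p x i \<in> F i) = (x i \<in> F' i)" by (simp add: flipc_def F'_def)
    have "flipc p -` prod_emb UNIV (\<lambda>_. measure_pmf (bernoulli_pmf (1/2))) J (Pi\<^sub>E J F)
           \<inter> space (PiM UNIV (\<lambda>_::nat. measure_pmf (bernoulli_pmf (1/2))))
         = prod_emb UNIV (\<lambda>_. measure_pmf (bernoulli_pmf (1/2))) J (Pi\<^sub>E J F')"
      by (auto simp: prod_emb_def space_PiM PiE_iff pw)
    then show "emeasure (distr (Pi\<^sub>M UNIV (\<lambda>_. measure_pmf (bernoulli_pmf (1/2)))) (Pi\<^sub>M UNIV (\<lambda>_. measure_pmf (bernoulli_pmf (1/2)))) (flipc p))
          (prod_emb UNIV (\<lambda>_. measure_pmf (bernoulli_pmf (1/2))) J (Pi\<^sub>E J F)) =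
         (\<Prod>j\<in>J. emeasure (measure_pmf (bernoulli_pmf (1/2))) (F j))"
      using J flip_meas[of p, unfolded coin_space_def]
      by (simp add: emeasure_distr sets_PiM_I)
        (subst emeasure_PiM_emb, auto simp: F'_def bern_flip prob_space_measure_pmf intro!: prod.cong)
  qed (rule sets_distr)
qed

lemma coin_prob: "prob_space coin_space"
  unfolding coin_space_def by (intro prob_space_PiM prob_space_measure_pmf)

lemma space_coin: "space coin_space = UNIV"
  unfolding coin_space_def by (simp add: space_PiM)

lemma comp_meas: "(\<lambda>\<omega>. g (\<omega> p) :: real) \<in> borel_measurable coin_space"
proof -
  have "(\<lambda>\<omega>. \<omega> p) \<in> measurable coin_space (measure_pmf (bernoulli_pmf (1/2)))"
    unfolding coin_space_def by (rule measurable_component_singleton) simp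
  then have "(\<lambda>\<omega>. \<omega> p) \<in> measurable coin_space (count_space UNIV)"
    using measurable_cong_sets[of coin_space coin_space "measure_pmf (bernoulli_pmf (1/2))" "count_space UNIV"]
    by (simp add: sets_measure_pmf_count_space)
  then show ?thesis by (rule measurable_compose) simp
qed

definition lam :: "(nat \<Rightarrow> bool) \<Rightarrow> nat \<Rightarrow> real" where
  "lam \<omega> n = real_of_int (lambdaQ (randQ \<omega>) n)"

lemma lam_formula: "lam \<omega> n = (\<Prod>p\<in>prime_factors n. (if \<omega> p then -1 else 1) ^ multiplicity p n)"
  unfolding lam_def lambdaQ_def randQ_def
  by (simp add: of_int_prod) (intro prod.cong, auto)

lemma lam_meas: "(\<lambda>\<omega>. lam \<omega> n) \<in> borel_measurable coin_space"
  unfolding lam_formula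
  by (intro borel_measurable_prod comp_meas[where g="\<lambda>b. (if b then -1 else 1) ^ _", simplified])


lemma sgn_pow_even: "even m \<Longrightarrow> ((if b then -1 else 1::real)) ^ m = 1"
  by (cases b) auto

lemma lam_ev: "evm n \<Longrightarrow> lam \<omega> n = 1"
  unfolding lam_formula evm_def
  by (intro prod.neutral ballI sgn_pow_even) (auto simp: in_prime_factors_iff)

lemma lam_flip:
  assumes p: "prime p" and odd: "odd (multiplicity p n)"
  shows "lam (flipc p \<omega>) n = - lam \<omega> n"
proof -
  have "multiplicity p n > 0" using odd by (cases "multiplicity p n") auto
  then have pin: "p \<in> prime_factors n" using p by (simp add: prime_factors_multiplicity)
  let ?f = "\<lambda>\<omega> q. (if \<omega> q then -1 else 1::real) ^ multiplicity q n"
  have "lam (flipc p \<omega>) n = ?f (flipc p \<omega>) p * (\<Prod>q\<in>prime_factors n - {p}. ?f (flipc p \<omega>) q)"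
    unfolding lam_formula using pin by (simp add: prod.remove)
  also have "(\<Prod>q\<in>prime_factors n - {p}. ?f (flipc p \<omega>) q) = (\<Prod>q\<in>prime_factors n - {p}. ?f \<omega> q)"
    by (intro prod.cong) (auto simp: flipc_def)
  also have "?f (flipc p \<omega>) p = - ?f \<omega> p"
    using odd by (cases "\<omega> p") (auto simp: flipc_def)
  also have "- ?f \<omega> p * (\<Prod>q\<in>prime_factors n - {p}. ?f \<omega> q) = - lam \<omega> n"
    unfolding lam_formula using pin by (simp add: prod.remove)
  finally show ?thesis .
qed

lemma exp_lam: "integral\<^sup>L coin_space (\<lambda>\<omega>. lam \<omega> n) = (if evm n then 1 else 0)"
proof (cases "evm n")
  case True
  interpret prob_space coin_space by (rule coin_prob)
  show ?thesis using True by (simp add: lam_ev prob_space)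
next
  case False
  then obtain p where p: "prime p" "odd (multiplicity p n)" unfolding evm_def by auto
  have "integral\<^sup>L coin_space (\<lambda>\<omega>. lam \<omega> n) = integral\<^sup>L (distr coin_space coin_space (flipc p)) (\<lambda>\<omega>. lam \<omega> n)"
    by (simp add: flip_distr)
  also have "\<dots> = integral\<^sup>L coin_space (\<lambda>\<omega>. lam (flipc p \<omega>) n)"
    by (rule integral_distr[OF flip_meas lam_meas])
  also have "\<dots> = - integral\<^sup>L coin_space (\<lambda>\<omega>. lam \<omega> n)"
    by (simp add: lam_flip[OF p])
  finally show ?thesis using False by simp
qed

lemma lambdaQ_mult:
  assumes "a > 0" "b > 0"
  shows "lambdaQ Q (a * b) = lambdaQ Q a * lambdaQ Q b"
proof -
  let ?s = "\<lambda>p. (if p \<in> Q then -1 else 1::int)"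
  let ?U = "prime_factors a \<union> prime_factors b"
  have U: "prime_factors (a*b) = ?U" using assms by (simp add: prime_factors_product)
  have m: "multiplicity p (a*b) = multiplicity p a + multiplicity p b" if "p \<in> ?U" for p
    using that assms by (intro prime_elem_multiplicity_mult_distrib) (auto simp: in_prime_factors_iff)
  have "lambdaQ Q (a*b) = (\<Prod>p\<in>?U. ?s p ^ multiplicity p a * ?s p ^ multiplicity p b)"
    unfolding lambdaQ_def U by (intro prod.cong refl) (simp add: m power_add)
  also have "\<dots> = (\<Prod>p\<in>?U. ?s p ^ multiplicity p a) * (\<Prod>p\<in>?U. ?s p ^ multiplicity p b)"
    by (rule prod.distrib)
  also have "(\<Prod>p\<in>?U. ?s p ^ multiplicity p a) = lambdaQ Q a"
    unfolding lambdaQ_def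
  proof (rule prod.mono_neutral_right)
    show "\<forall>i\<in>?U - prime_factors a. ?s i ^ multiplicity i a = 1"
    proof
      fix i assume i: "i \<in> ?U - prime_factors a"
      then have "prime i" by (auto simp: in_prime_factors_iff)
      with i have "multiplicity i a = 0" using prime_factors_multiplicity[of a] by auto
      then show "?s i ^ multiplicity i a = 1" by simp
    qed
  qed auto
  also have "(\<Prod>p\<in>?U. ?s p ^ multiplicity p b) = lambdaQ Q b"
    unfolding lambdaQ_def
  proof (rule prod.mono_neutral_right)
    show "\<forall>i\<in>?U - prime_factors b. ?s i ^ multiplicity i b = 1"
    proof
      fix i assume i: "i \<in> ?U - prime_factors b"
      then have "prime i" by (auto simp: in_prime_factors_iff)
      with i have "multiplicity i b = 0" using prime_factors_multiplicity[of b] by auto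
      then show "?s i ^ multiplicity i b = 1" by simp
    qed
  qed auto
  finally show ?thesis .
qed

lemma lam_mult: "a > 0 \<Longrightarrow> b > 0 \<Longrightarrow> lam \<omega> (a * b) = lam \<omega> a * lam \<omega> b"
  unfolding lam_def by (simp add: lambdaQ_mult)

lemma lambdaQ_pm: "lambdaQ Q n = 1 \<or> lambdaQ Q n = -1"
proof -
  have "\<bar>lambdaQ Q n\<bar> = 1"
    unfolding lambdaQ_def abs_prod by (intro prod.neutral) (simp add: power_abs)
  then show ?thesis by auto
qed

lemma lam_abs: "\<bar>lam \<omega> n\<bar> = 1"
  unfolding lam_def using lambdaQ_pm[of "randQ \<omega>" n] by auto



declare lam_meas[measurable]

lemma lam_int: "integrable coin_space (\<lambda>\<omega>. lam \<omega> n)"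
proof -
  interpret prob_space coin_space by (rule coin_prob)
  show ?thesis by (rule integrable_const_bound[where B=1]) (auto simp: lam_abs)
qed

lemma sum_if_card: "finite A \<Longrightarrow> (\<Sum>i\<in>A. if P i then 1 else 0 :: real) = real (card {i\<in>A. P i})"
  by (simp add: sum.If_cases Int_def conj_commute)

definition Ysum :: "nat set \<Rightarrow> nat \<Rightarrow> (nat \<Rightarrow> bool) \<Rightarrow> real" where
  "Ysum T N \<omega> = (\<Sum>i\<in>{1..N}. lam \<omega> (PT T i))"

lemma Ysum_meas[measurable]: "Ysum T N \<in> borel_measurable coin_space"
  unfolding Ysum_def by measurable

lemma Ysum_sq_int: "integrable coin_space (\<lambda>\<omega>. (Ysum T N \<omega>)^2)"
proof -
  interpret prob_space coin_space by (rule coin_prob)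
  have b: "\<bar>Ysum T N \<omega>\<bar> \<le> real N" for \<omega>
  proof -
    have "\<bar>Ysum T N \<omega>\<bar> \<le> (\<Sum>i\<in>{1..N}. \<bar>lam \<omega> (PT T i)\<bar>)" unfolding Ysum_def by (rule sum_abs)
    also have "\<dots> = real N" by (simp add: lam_abs)
    finally show ?thesis .
  qed
  have "\<bar>(Ysum T N \<omega>)^2\<bar> \<le> real N ^ 2" for \<omega>
    using power_mono[OF b[of \<omega>] abs_ge_zero, where n=2] by simp
  then show ?thesis by (intro integrable_const_bound[where B="real N ^ 2"]) auto
qed

lemma exp_Ysum_sq:
  "integral\<^sup>L coin_space (\<lambda>\<omega>. (Ysum T N \<omega>)^2)
     = real (\<Sum>i'\<in>{1..N}. card {i\<in>{1..N}. evm (PT T i' * PT T i)})"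
proof -
  have sq: "(Ysum T N \<omega>)^2 = (\<Sum>i'\<in>{1..N}. \<Sum>i\<in>{1..N}. lam \<omega> (PT T i' * PT T i))" for \<omega>
    unfolding Ysum_def power2_eq_square sum_product
    by (intro sum.cong refl) (simp add: lam_mult PT_pos)
  have "integral\<^sup>L coin_space (\<lambda>\<omega>. (Ysum T N \<omega>)^2)
        = (\<Sum>i'\<in>{1..N}. \<Sum>i\<in>{1..N}. integral\<^sup>L coin_space (\<lambda>\<omega>. lam \<omega> (PT T i' * PT T i)))"
    unfolding sq
    by (subst Bochner_Integration.integral_sum, rule Bochner_Integration.integrable_sum, rule lam_int)
       (rule sum.cong[OF refl], rule Bochner_Integration.integral_sum, rule lam_int)
  also have "\<dots> = (\<Sum>i'\<in>{1..N}. real (card {i\<in>{1..N}. evm (PT T i' * PT T i)}))"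
    by (simp add: exp_lam sum_if_card)
  finally show ?thesis by simp
qed

lemma AE_sub:
  assumes T: "T \<noteq> {}" "T \<subseteq> {..<k}"
  shows "AE \<omega> in coin_space. (\<lambda>m. Ysum T ((m+1)^8) \<omega> / real ((m+1)^8)) \<longlonglongrightarrow> 0"
proof -
  interpret prob_space coin_space by (rule coin_prob)
  obtain C where C: "\<And>N. N \<ge> 1 \<Longrightarrow> real (\<Sum>i'\<in>{1..N}. card {i\<in>{1..N}. evm (PT T i' * PT T i)})
                \<le> C * real N * real N powr (3/4)"
    using D_bound[OF T] by blast
  define Z where "Z m \<omega> = (Ysum T ((m+1)^8) \<omega> / real ((m+1)^8))^2" for m \<omega>
  have Zmeas[measurable]: "Z m \<in> borel_measurable coin_space" for m unfolding Z_def by measurable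
  have Zint: "integrable coin_space (Z m)" for m
    unfolding Z_def power_divide by (intro integrable_divide Ysum_sq_int)
  have EZ: "integral\<^sup>L coin_space (Z m) \<le> C * inverse (real (Suc m) ^ 2)" for m
  proof -
    define N where "N = (m+1)^8"
    have N1: "N \<ge> 1" unfolding N_def by simp
    have "integral\<^sup>L coin_space (Z m) = integral\<^sup>L coin_space (\<lambda>\<omega>. (Ysum T N \<omega>)^2) / real N ^ 2"
      unfolding Z_def N_def power_divide by (rule integral_divide_zero)
    also have "\<dots> \<le> C * real N * real N powr (3/4) / real N ^ 2"
      unfolding exp_Ysum_sq by (intro divide_right_mono C N1) simp
    also have "real N powr (3/4) = real (m+1) ^ 6"
    proof -
      have e: "real N = real (m+1) powr (real 8)" unfolding N_def by (simp add: powr_realpow)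
      have "real N powr (3/4) = real (m+1) powr (real 8 * (3/4))" unfolding e by (rule powr_powr)
      also have e2: "real 8 * (3/4::real) = real 6" by simp
      also have "real (m+1) powr (real 6) = real (m+1) ^ 6" by (rule powr_realpow) simp
      finally show ?thesis .
    qed
    also have "C * real N * real (m+1) ^ 6 / real N ^ 2 = C * inverse (real (Suc m) ^ 2)"
      unfolding N_def by (simp add: field_simps)
    finally show ?thesis .
  qed
  have EZ0: "integral\<^sup>L coin_space (Z m) \<ge> 0" for m
    unfolding Z_def by (intro integral_nonneg_AE) auto
  have summ_bound: "summable (\<lambda>m. C * inverse (real (Suc m) ^ 2))"
    by (intro summable_mult) (simp add: summable_Suc_iff[of "\<lambda>n. inverse (real n ^ 2)"] inverse_power_summable del: of_nat_Suc)
  have summ: "summable (\<lambda>m. integral\<^sup>L coin_space (Z m))"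
    by (rule summable_comparison_test'[OF summ_bound, of 0]) (use EZ EZ0 in auto)
  have "(\<integral>\<^sup>+\<omega>. (\<Sum>m. ennreal (Z m \<omega>)) \<partial>coin_space) = (\<Sum>m. \<integral>\<^sup>+\<omega>. ennreal (Z m \<omega>) \<partial>coin_space)"
    by (rule nn_integral_suminf) measurable
  also have "\<dots> = (\<Sum>m. ennreal (integral\<^sup>L coin_space (Z m)))"
    by (intro arg_cong[where f=suminf] ext nn_integral_eq_integral Zint) (auto simp: Z_def)
  also have "\<dots> = ennreal (\<Sum>m. integral\<^sup>L coin_space (Z m))"
    by (rule suminf_ennreal2[OF EZ0 summ])
  finally have fin: "(\<integral>\<^sup>+\<omega>. (\<Sum>m. ennreal (Z m \<omega>)) \<partial>coin_space) \<noteq> \<infinity>" by simp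
  have "AE \<omega> in coin_space. (\<Sum>m. ennreal (Z m \<omega>)) \<noteq> \<infinity>"
    by (rule nn_integral_noteq_infinite[OF _ fin]) measurable
  then show ?thesis
  proof (rule AE_mp, intro AE_I2 impI)
    fix \<omega> assume "(\<Sum>m. ennreal (Z m \<omega>)) \<noteq> \<infinity>"
    then have "summable (\<lambda>m. Z m \<omega>)" by (intro summable_suminf_not_top) (auto simp: Z_def)
    then have "(\<lambda>m. Z m \<omega>) \<longlonglongrightarrow> 0" by (rule summable_LIMSEQ_zero)
    then have "(\<lambda>m. sqrt (Z m \<omega>)) \<longlonglongrightarrow> sqrt 0" by (rule tendsto_real_sqrt)
    then have "(\<lambda>m. \<bar>Ysum T ((m+1)^8) \<omega> / real ((m+1)^8)\<bar>) \<longlonglongrightarrow> 0" by (simp add: Z_def)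
    then show "(\<lambda>m. Ysum T ((m+1)^8) \<omega> / real ((m+1)^8)) \<longlonglongrightarrow> 0"
      by (rule tendsto_rabs_zero_cancel)
  qed
qed



lemma interp:
  fixes X :: "nat \<Rightarrow> real"
  assumes bnd: "\<And>i. \<bar>X i\<bar> \<le> 1"
  and sub: "(\<lambda>m. (\<Sum>i\<in>{1..(m+1)^8}. X i) / real ((m+1)^8)) \<longlonglongrightarrow> 0"
  shows "(\<lambda>N. (\<Sum>i\<in>{1..N}. X i) / real N) \<longlonglongrightarrow> 0"
proof (rule LIMSEQ_I)
  fix r :: real assume r: "r > 0"
  define g where "g q = ((real q + 1)^8 - real q^8) / real q^8" for q :: nat
  have "g \<longlonglongrightarrow> 0" unfolding g_def by real_asymp
  from LIMSEQ_D[OF this, of "r/2"] r obtain M2 where M2: "\<And>q. q \<ge> M2 \<Longrightarrow> \<bar>g q\<bar> < r/2" by auto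
  from LIMSEQ_D[OF sub, of "r/2"] r obtain M1 where
    M1: "\<And>m. m \<ge> M1 \<Longrightarrow> \<bar>(\<Sum>i\<in>{1..(m+1)^8}. X i) / real ((m+1)^8)\<bar> < r/2" by auto
  define Q where "Q = max (M1 + 1) (max M2 1)"
  show "\<exists>no. \<forall>N\<ge>no. norm ((\<Sum>i\<in>{1..N}. X i) / real N - 0) < r"
  proof (intro exI allI impI)
    fix N assume N: "N \<ge> Q ^ 8"
    define q where "q = nat \<lfloor>root 8 (real N)\<rfloor>"
    have rQ: "root 8 (real N) \<ge> real Q"
    proof -
      have "real Q = root 8 (real Q ^ 8)" by (simp add: real_root_power_cancel)
      also have "\<dots> \<le> root 8 (real N)" using N by (simp flip: of_nat_power)
      finally show ?thesis .
    qed
    have qQ: "q \<ge> Q" unfolding q_def using rQ by (simp add: le_nat_floor)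
    have q1: "q \<ge> 1" "q \<ge> M1 + 1" "q \<ge> M2" using qQ by (auto simp: Q_def)
    have rq: "real q \<le> root 8 (real N)" "root 8 (real N) < real q + 1"
      unfolding q_def using rQ by (auto simp: of_nat_nat)
    have "real q ^ 8 \<le> root 8 (real N) ^ 8" by (intro power_mono rq) auto
    then have qN: "q ^ 8 \<le> N" by (simp flip: of_nat_power)
    have "root 8 (real N) ^ 8 < (real q + 1) ^ 8" by (intro power_strict_mono rq) auto
    then have Nq: "real N < (real q + 1) ^ 8" by simp
    define S where "S = (\<Sum>i\<in>{1..q^8}. X i)"
    define R where "R = (\<Sum>i\<in>{q^8<..N}. X i)"
    have split: "(\<Sum>i\<in>{1..N}. X i) = S + R"
    proof -
      have "{1..N} = {1..q^8} \<union> {q^8<..N}" using qN by auto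
      then show ?thesis unfolding S_def R_def by (simp add: sum.union_disjoint ivl_disj_int)
    qed
    have Rb: "\<bar>R\<bar> \<le> real N - real q ^ 8"
    proof -
      have "\<bar>R\<bar> \<le> (\<Sum>i\<in>{q^8<..N}. \<bar>X i\<bar>)" unfolding R_def by (rule sum_abs)
      also have "\<dots> \<le> (\<Sum>i\<in>{q^8<..N}. 1)" by (intro sum_mono bnd)
      also have "\<dots> = real N - real q ^ 8" using qN by (simp add: of_nat_diff)
      finally show ?thesis .
    qed
    have qpos: "real q ^ 8 > 0" using q1 by simp
    have Npos: "real N \<ge> real q ^ 8" using qN by (simp flip: of_nat_power)
    have a: "\<bar>S / real q ^ 8\<bar> < r/2"
    proof -
      have "q - 1 \<ge> M1" using q1 by simp
      from M1[OF this] show ?thesis using q1 unfolding S_def by simp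
    qed
    have b: "(real N - real q ^ 8) / real q ^ 8 < r/2"
    proof -
      have "(real N - real q ^ 8) / real q ^ 8 \<le> g q"
        unfolding g_def using Nq qpos by (intro divide_right_mono) auto
      also have "\<dots> < r/2" using M2[OF q1(3)] by simp
      finally show ?thesis .
    qed
    have "\<bar>(S + R) / real N\<bar> \<le> \<bar>S\<bar> / real N + \<bar>R\<bar> / real N"
      using qpos Npos by (simp add: abs_triangle_ineq add_divide_distrib[symmetric] divide_right_mono)
    also have "\<dots> \<le> \<bar>S\<bar> / real q ^ 8 + (real N - real q ^ 8) / real q ^ 8"
      using qpos Npos Rb by (intro add_mono frac_le) auto
    also have "\<dots> < r/2 + r/2" using a b by (intro add_less_le_mono) (auto simp: abs_divide)
    finally show "norm ((\<Sum>i\<in>{1..N}. X i) / real N - 0) < r" using split by simp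
  qed
qed



lemma lam_one: "lam \<omega> 1 = 1"
  by (simp add: lam_formula)

lemma lam_one': "lam \<omega> (Suc 0) = 1"
  unfolding One_nat_def[symmetric] by (rule lam_one)

lemma lam_PT:
  assumes i: "i \<ge> 1" and fin: "finite T"
  shows "lam \<omega> (PT T i) = (\<Prod>j\<in>T. lam \<omega> (i + j))"
  using fin
proof (induction T rule: finite_induct)
  case empty then show ?case by (simp add: PT_def lam_one')
next
  case (insert x F)
  have "PT (insert x F) i = (i + x) * PT F i" using insert by (simp add: PT_def)
  then show ?case using insert PT_pos[OF i, of F] i by (simp add: lam_mult)
qed

lemma corr_AE:
  assumes T: "finite T" "T \<noteq> {}"
  shows "AE \<omega> in coin_space. (\<lambda>N. Ysum T N \<omega> / real N) \<longlonglongrightarrow> 0"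
proof -
  have sub: "T \<subseteq> {..<Suc (Max T)}" using T by (auto simp: le_imp_less_Suc)
  show ?thesis
    using AE_sub[OF T(2) sub]
  proof (rule AE_mp, intro AE_I2 impI)
    fix \<omega> assume "(\<lambda>m. Ysum T ((m+1)^8) \<omega> / real ((m+1)^8)) \<longlonglongrightarrow> 0"
    then show "(\<lambda>N. Ysum T N \<omega> / real N) \<longlonglongrightarrow> 0"
      unfolding Ysum_def by (intro interp) (auto simp: lam_abs)
  qed
qed

lemma all_corr_AE:
  "AE \<omega> in coin_space. \<forall>L. \<forall>T\<in>Pow {..<L}. T \<noteq> {} \<longrightarrow> (\<lambda>N. Ysum T N \<omega> / real N) \<longlonglongrightarrow> 0"
  unfolding AE_all_countable
proof
  fix L :: nat
  show "AE \<omega> in coin_space. \<forall>T\<in>Pow {..<L}. T \<noteq> {} \<longrightarrow> (\<lambda>N. Ysum T N \<omega> / real N) \<longlonglongrightarrow> 0"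
    by (rule AE_finite_allI) (auto intro: corr_AE finite_subset)
qed

lemma Ysum_empty: "Ysum {} N \<omega> = real N"
  by (simp add: Ysum_def PT_def lam_one')

lemma normal_from_corr:
  assumes corr: "\<forall>L. \<forall>T\<in>Pow {..<L}. T \<noteq> {} \<longrightarrow> (\<lambda>N. Ysum T N \<omega> / real N) \<longlonglongrightarrow> 0"
  shows "normal_set (AQ (randQ \<omega>))"
  unfolding normal_set_def normal_seq_def
proof
  fix w :: "bool list"
  define L where "L = length w"
  define \<sigma> where "\<sigma> j = (if w ! j then -1 else 1 :: real)" for j
  have xiff: "(i + j \<in> AQ (randQ \<omega>)) = (lam \<omega> (i + j) = -1)" if "i \<ge> 1" for i j
    using that by (auto simp: AQ_def lam_def)
  have ind: "(if (\<forall>j<L. (i + j \<in> AQ (randQ \<omega>)) = w ! j) then 1 else 0)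
              = (1/2)^L * (\<Sum>T\<in>Pow {..<L}. (\<Prod>j\<in>T. \<sigma> j) * lam \<omega> (PT T i))" if i: "i \<ge> 1" for i
  proof -
    have fac: "(1 + \<sigma> j * lam \<omega> (i + j)) / 2 = (if (i + j \<in> AQ (randQ \<omega>)) = w ! j then 1 else 0)" for j
    proof -
      have "lam \<omega> (i + j) = 1 \<or> lam \<omega> (i + j) = -1" using lam_abs[of \<omega> "i+j"] by auto
      then show ?thesis using xiff[OF i, of j] by (auto simp: \<sigma>_def)
    qed
    have "(if (\<forall>j<L. (i + j \<in> AQ (randQ \<omega>)) = w ! j) then 1 else 0)
          = (\<Prod>j<L. (if (i + j \<in> AQ (randQ \<omega>)) = w ! j then 1 else 0 :: real))"
      by (induction L) (auto simp: less_Suc_eq)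
    also have "\<dots> = (\<Prod>j<L. (1 + \<sigma> j * lam \<omega> (i + j)) / 2)" by (simp add: fac)
    also have "\<dots> = (1/2)^L * (\<Prod>j<L. 1 + \<sigma> j * lam \<omega> (i + j))"
      by (simp add: prod_dividef field_simps)
    also have "(\<Prod>j<L. 1 + \<sigma> j * lam \<omega> (i + j)) = (\<Prod>j<L. \<sigma> j * lam \<omega> (i + j) + 1)"
      by (simp add: add.commute)
    also have "\<dots> = (\<Sum>T\<in>Pow {..<L}. (\<Prod>j\<in>T. \<sigma> j * lam \<omega> (i + j)) * (\<Prod>j\<in>{..<L}-T. 1))"
      by (rule prod_add) simp
    also have "\<dots> = (\<Sum>T\<in>Pow {..<L}. (\<Prod>j\<in>T. \<sigma> j) * lam \<omega> (PT T i))"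
    proof (intro sum.cong refl)
      fix T assume "T \<in> Pow {..<L}"
      then have "finite T" using finite_subset by auto
      then show "(\<Prod>j\<in>T. \<sigma> j * lam \<omega> (i + j)) * (\<Prod>j\<in>{..<L}-T. 1) = (\<Prod>j\<in>T. \<sigma> j) * lam \<omega> (PT T i)"
        using i by (simp add: lam_PT prod.distrib)
    qed
    finally show ?thesis .
  qed
  have cnt: "real (card {i \<in> {1..N}. \<forall>j < length w. (i + j \<in> AQ (randQ \<omega>)) = w ! j}) / real N
        = (1/2)^L * (\<Sum>T\<in>Pow {..<L}. (\<Prod>j\<in>T. \<sigma> j) * (Ysum T N \<omega> / real N))" for N
  proof -
    have "real (card {i \<in> {1..N}. \<forall>j < length w. (i + j \<in> AQ (randQ \<omega>)) = w ! j})
          = (\<Sum>i\<in>{1..N}. (if (\<forall>j<L. (i + j \<in> AQ (randQ \<omega>)) = w ! j) then 1 else 0))"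
      by (simp add: sum_if_card L_def)
    also have "\<dots> = (\<Sum>i\<in>{1..N}. (1/2)^L * (\<Sum>T\<in>Pow {..<L}. (\<Prod>j\<in>T. \<sigma> j) * lam \<omega> (PT T i)))"
      by (intro sum.cong refl ind) auto
    also have "\<dots> = (1/2)^L * (\<Sum>T\<in>Pow {..<L}. (\<Prod>j\<in>T. \<sigma> j) * Ysum T N \<omega>)"
      unfolding Ysum_def by (simp add: sum_distrib_left, rule sum.swap)
    finally show ?thesis
      by (simp add: sum_divide_distrib[symmetric])
  qed
  have lim: "(\<lambda>N. (1/2)^L * (\<Sum>T\<in>Pow {..<L}. (\<Prod>j\<in>T. \<sigma> j) * (Ysum T N \<omega> / real N)))
             \<longlonglongrightarrow> (1/2)^L * (\<Sum>T\<in>Pow {..<L}. (\<Prod>j\<in>T. \<sigma> j) * (if T = {} then 1 else 0))"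
  proof (intro tendsto_mult_left tendsto_sum)
    fix T assume T: "T \<in> Pow {..<L}"
    show "(\<lambda>N. Ysum T N \<omega> / real N) \<longlonglongrightarrow> (if T = {} then 1 else 0)"
    proof (cases "T = {}")
      case True
      have "(\<lambda>N. Ysum T (Suc N) \<omega> / real (Suc N)) \<longlonglongrightarrow> 1"
        using True by (simp add: Ysum_empty del: of_nat_Suc)
      then show ?thesis using True by (simp add: LIMSEQ_imp_Suc)
    next
      case False
      then show ?thesis using corr[rule_format, OF T False] by simp
    qed
  qed
  have "(\<Sum>T\<in>Pow {..<L}. (\<Prod>j\<in>T. \<sigma> j) * (if T = {} then 1 else 0)) = (\<Sum>T\<in>Pow {..<L}. if T = {} then 1 else 0)"
    by (intro sum.cong refl) auto
  also have "\<dots> = 1" by (subst sum.delta) auto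
  finally have one: "(\<Sum>T\<in>Pow {..<L}. (\<Prod>j\<in>T. \<sigma> j) * (if T = {} then 1 else 0)) = 1" .
  then show "(\<lambda>N. real (card {i \<in> {1..N}. \<forall>j < length w. (i + j \<in> AQ (randQ \<omega>)) = w ! j}) / real N)
            \<longlonglongrightarrow> (1/2) ^ length w"
    using lim unfolding cnt one L_def by simp
qed

theorem mainTheorem1:
  shows "AE \<omega> in coin_space. normal_set (AQ (randQ \<omega>))"
  using all_corr_AE by (rule AE_mp) (intro AE_I2 impI normal_from_corr)


end
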